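(* Let $G$ be a group with a finite generating set $S$, equipped with the word metric $d_S$, and suppose $G$ acts transitively by isometries on a metric space $M$. Fix a basepoint $x_0 \in M$. Suppose that $M$ has asymptotic property C and that there is an integer $n \ge 0$ such that for every $R > 0$, the quasi-stabilizer $W_R(x_0)$ (with the metric restricted from $d_S$) has asymptotic dimension at most $n$. Then $G$ (with the metric $d_S$) has asymptotic property C.
   Context: The word metric on $G$ with respect to the finite generating set $S$ is $d_S(g,h) = $ the length of a shortest word in $S \cup S^{-1}$ representing $g^{-1}h$; it is left-invariant. A family $\mathcal{F}$ of subsets of a metric space $X$ is uniformly bounded if there is $R>0$ with $\mathrm{diam}(F) < R$ for all $F \in \mathcal{F}$; for $r>0$, $\mathcal{F}$ is $r$-disjoint if $d(F_1,F_2) > r$ for all distinct $F_1, F_2 \in \mathcal{F}$. A metric space $X$ has asymptotic dimension at most $n$ if for every $r>0$ there exist $n+1$ uniformly bounded, $r$-disjoint families $\mathcal{F}_0,\dots,\mathcal{F}_n$ of subsets of $X$ whose union covers $X$. A metric space $X$ has asymptotic property C if for every sequence of real numbers $0<r_0<r_1<\cdots$ there exist $m \in \mathbb{N}$ and uniformly bounded families $\mathcal{F}_0,\dots,\mathcal{F}_m$ of subsets of $X$ such that each $\mathcal{F}_i$ is $r_i$-disjoint and $\bigcup_{i=0}^m \mathcal{F}_i$ covers $X$. For a group $G$ acting by isometries on $M$, $x \in M$ and $R>0$, the $R$-quasi-stabilizer of $x$ is $W_R(x) = \{ g \in G \mid d_M(x, gx) \le R\}$. *)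

theory Defs
  imports "HOL-Analysis.Analysis" "HOL-Algebra.Group_Action" "HOL-Algebra.Generated_Groups"
begin

text \<open>Metric notions for a space given by a carrier X and distance d.
  Diameters and set distances are taken in the extended reals
  (sup of the empty set is -infinity, inf of the empty set is +infinity).\<close>

definition set_diam :: "('a \<Rightarrow> 'a \<Rightarrow> real) \<Rightarrow> 'a set \<Rightarrow> ereal" where
  "set_diam d F = (SUP x\<in>F. SUP y\<in>F. ereal (d x y))"

definition set_dist :: "('a \<Rightarrow> 'a \<Rightarrow> real) \<Rightarrow> 'a set \<Rightarrow> 'a set \<Rightarrow> ereal" where
  "set_dist d A B = (INF x\<in>A. INF y\<in>B. ereal (d x y))"

definition uniformly_bounded :: "('a \<Rightarrow> 'a \<Rightarrow> real) \<Rightarrow> 'a set set \<Rightarrow> bool" where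
  "uniformly_bounded d \<F> \<longleftrightarrow> (\<exists>R>0. \<forall>F\<in>\<F>. set_diam d F < ereal R)"

definition r_disjoint :: "('a \<Rightarrow> 'a \<Rightarrow> real) \<Rightarrow> real \<Rightarrow> 'a set set \<Rightarrow> bool" where
  "r_disjoint d r \<F> \<longleftrightarrow> (\<forall>F1\<in>\<F>. \<forall>F2\<in>\<F>. F1 \<noteq> F2 \<longrightarrow> set_dist d F1 F2 > ereal r)"

definition asdim_le :: "'a set \<Rightarrow> ('a \<Rightarrow> 'a \<Rightarrow> real) \<Rightarrow> nat \<Rightarrow> bool" where
  "asdim_le X d n \<longleftrightarrow>
     (\<forall>r>0. \<exists>\<F> :: nat \<Rightarrow> 'a set set.
        (\<forall>i\<le>n. (\<forall>F\<in>\<F> i. F \<subseteq> X) \<and> uniformly_bounded d (\<F> i) \<and> r_disjoint d r (\<F> i))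
        \<and> X \<subseteq> (\<Union>i\<le>n. \<Union>(\<F> i)))"

definition asymptotic_property_C :: "'a set \<Rightarrow> ('a \<Rightarrow> 'a \<Rightarrow> real) \<Rightarrow> bool" where
  "asymptotic_property_C X d \<longleftrightarrow>
     (\<forall>r :: nat \<Rightarrow> real. 0 < r 0 \<and> strict_mono r \<longrightarrow>
        (\<exists>m::nat. \<exists>\<F> :: nat \<Rightarrow> 'a set set.
           (\<forall>i\<le>m. (\<forall>F\<in>\<F> i. F \<subseteq> X) \<and> uniformly_bounded d (\<F> i) \<and> r_disjoint d (r i) (\<F> i))
           \<and> X \<subseteq> (\<Union>i\<le>m. \<Union>(\<F> i))))"

definition word_length :: "('g, 'b) monoid_scheme \<Rightarrow> 'g set \<Rightarrow> 'g \<Rightarrow> nat" where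
  "word_length G S g = (LEAST n. \<exists>ws. length ws = n \<and> set ws \<subseteq> S \<union> m_inv G ` S
                                   \<and> foldr (\<otimes>\<^bsub>G\<^esub>) ws \<one>\<^bsub>G\<^esub> = g)"

definition word_dist :: "('g, 'b) monoid_scheme \<Rightarrow> 'g set \<Rightarrow> 'g \<Rightarrow> 'g \<Rightarrow> real" where
  "word_dist G S g h = real (word_length G S (inv\<^bsub>G\<^esub> g \<otimes>\<^bsub>G\<^esub> h))"

definition quasi_stabilizer ::
  "('g, 'b) monoid_scheme \<Rightarrow> ('g \<Rightarrow> 'm \<Rightarrow> 'm) \<Rightarrow> ('m \<Rightarrow> 'm \<Rightarrow> real) \<Rightarrow> real \<Rightarrow> 'm \<Rightarrow> 'g set" where
  "quasi_stabilizer G \<phi> dM R x = {g \<in> carrier G. dM x (\<phi> g x) \<le> R}"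

end

theory Submission
  imports Defs
begin

lemma set_diam_le: "(\<forall>x\<in>F. \<forall>y\<in>F. d x y \<le> B) \<Longrightarrow> set_diam d F \<le> ereal B"
  unfolding set_diam_def by (auto intro!: SUP_least)

lemma set_diam_lt: "set_diam d F < ereal R \<Longrightarrow> x\<in>F \<Longrightarrow> y\<in>F \<Longrightarrow> d x y < R"
proof -
  assume a: "set_diam d F < ereal R" "x\<in>F" "y\<in>F"
  have "ereal (d x y) \<le> set_diam d F"
    unfolding set_diam_def using a by (meson SUP_upper2 order_refl)
  with a have "ereal (d x y) < ereal R" by (meson order_le_less_trans)
  then show ?thesis by simp
qed

lemma set_dist_ge: "(\<forall>x\<in>A. \<forall>y\<in>B. c \<le> d x y) \<Longrightarrow> ereal c \<le> set_dist d A B"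
  unfolding set_dist_def by (auto intro!: INF_greatest)

lemma set_dist_le_pt: "x\<in>A \<Longrightarrow> y\<in>B \<Longrightarrow> set_dist d A B \<le> ereal (d x y)"
  unfolding set_dist_def by (meson INF_lower2 order_refl)

lemma set_dist_mono:
  assumes "\<And>x y. x\<in>A \<Longrightarrow> y\<in>B \<Longrightarrow> \<exists>x'\<in>A'. \<exists>y'\<in>B'. d x' y' \<le> d x y"
  shows "set_dist d A' B' \<le> set_dist d A B"
proof -
  have "set_dist d A' B' \<le> ereal (d x y)" if xy: "x\<in>A" "y\<in>B" for x y
  proof -
    obtain x' y' where "x'\<in>A'" "y'\<in>B'" "d x' y' \<le> d x y" using assms[OF xy] by blast
    then show ?thesis using set_dist_le_pt[of x' A' y' B' d] by (meson ereal_less_eq(3) order_trans)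
  qed
  then show ?thesis unfolding set_dist_def[of d A B] by (auto intro!: INF_greatest)
qed

locale p1ctx = group G for G (structure) +
  fixes S M dM \<phi> x0
  assumes finS: "finite S" and SG: "S \<subseteq> carrier G" and gen: "generate G S = carrier G"
    and ms: "Metric_space M dM"
    and ga: "group_action G M \<phi>"
    and iso: "\<forall>g\<in>carrier G. \<forall>x\<in>M. \<forall>y\<in>M. dM (\<phi> g x) (\<phi> g y) = dM x y"
    and x0M: "x0 \<in> M"
begin

abbreviation "T \<equiv> S \<union> m_inv G ` S"

lemma T_carrier: "set ws \<subseteq> T \<Longrightarrow> foldr (\<otimes>) ws \<one> \<in> carrier G"
  by (induction ws) (use SG in auto)

lemma foldr_mult: "set ws \<subseteq> T \<Longrightarrow> a \<in> carrier G \<Longrightarrow> foldr (\<otimes>) ws a = foldr (\<otimes>) ws \<one> \<otimes> a"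
proof (induction ws)
  case Nil then show ?case by simp
next
  case (Cons w ws)
  have w: "w \<in> carrier G" using Cons.prems SG by auto
  have "foldr (\<otimes>) ws \<one> \<in> carrier G" using T_carrier Cons.prems by auto
  then show ?case using Cons w by (simp add: m_assoc)
qed

lemma word_exists: "g \<in> generate G S \<Longrightarrow> \<exists>ws. set ws \<subseteq> T \<and> foldr (\<otimes>) ws \<one> = g"
proof (induction rule: generate.induct)
  case one then show ?case by (intro exI[of _ "[]"]) auto
next
  case (incl h) then show ?case using SG by (intro exI[of _ "[h]"]) auto
next
  case (inv h) then show ?case using SG by (intro exI[of _ "[inv h]"]) auto
next
  case (eng h1 h2)
  then obtain w1 w2 where w: "set w1 \<subseteq> T" "foldr (\<otimes>) w1 \<one> = h1" "set w2 \<subseteq> T" "foldr (\<otimes>) w2 \<one> = h2"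
    by blast
  have "foldr (\<otimes>) (w1 @ w2) \<one> = h1 \<otimes> h2"
    using foldr_mult[OF w(1) T_carrier[OF w(3)]] w by simp
  then show ?case using w by (intro exI[of _ "w1 @ w2"]) auto
qed

lemma word_length_attained: assumes "g \<in> carrier G"
  shows "\<exists>ws. length ws = word_length G S g \<and> set ws \<subseteq> T \<and> foldr (\<otimes>) ws \<one> = g"
proof -
  obtain ws where "set ws \<subseteq> T" "foldr (\<otimes>) ws \<one> = g" using word_exists gen assms by blast
  then have "\<exists>n ws. length ws = n \<and> set ws \<subseteq> T \<and> foldr (\<otimes>) ws \<one> = g" by blast
  then show ?thesis unfolding word_length_def by (rule LeastI_ex)
qed

lemma wd_left: assumes "a \<in> carrier G" "g \<in> carrier G" "h \<in> carrier G"
  shows "word_dist G S (a \<otimes> g) (a \<otimes> h) = word_dist G S g h"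
proof -
  have "inv (a \<otimes> g) \<otimes> (a \<otimes> h) = inv g \<otimes> h"
    using assms by (simp add: inv_mult_group m_assoc[symmetric]) (simp add: m_assoc)
  then show ?thesis unfolding word_dist_def by simp
qed

lemma wd_nonneg: "0 \<le> word_dist G S g h" unfolding word_dist_def by simp

lemma phi_comp: "x \<in> M \<Longrightarrow> g1 \<in> carrier G \<Longrightarrow> g2 \<in> carrier G \<Longrightarrow> \<phi> (g1 \<otimes> g2) x = \<phi> g1 (\<phi> g2 x)"
  using group_action.composition_rule[OF ga] by blast

lemma phi_M: "g \<in> carrier G \<Longrightarrow> x \<in> M \<Longrightarrow> \<phi> g x \<in> M"
  using group_action.element_image[OF ga] by blast

lemma phi_one: "x \<in> M \<Longrightarrow> \<phi> \<one> x = x"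
  using group_action.id_eq_one[OF ga] by (metis restrict_apply')

lemma iso_inv: assumes "g \<in> carrier G" "h \<in> carrier G"
  shows "dM x0 (\<phi> (inv g \<otimes> h) x0) = dM (\<phi> g x0) (\<phi> h x0)"
proof -
  have "\<phi> g (\<phi> (inv g \<otimes> h) x0) = \<phi> h x0"
    using assms x0M by (simp add: phi_comp[symmetric] m_assoc[symmetric])
  moreover have "dM (\<phi> g x0) (\<phi> g (\<phi> (inv g \<otimes> h) x0)) = dM x0 (\<phi> (inv g \<otimes> h) x0)"
    using iso assms x0M phi_M by auto
  ultimately show ?thesis by simp
qed

definition "lam = (\<Sum>s\<in>S. dM x0 (\<phi> s x0))"

lemma lam_nonneg: "0 \<le> lam"
  unfolding lam_def using Metric_space.nonneg[OF ms] by (simp add: sum_nonneg)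

lemma gen_bound: assumes "s \<in> T" shows "dM x0 (\<phi> s x0) \<le> lam"
proof -
  have b: "dM x0 (\<phi> t x0) \<le> lam" if "t \<in> S" for t
    unfolding lam_def using that finS Metric_space.nonneg[OF ms]
    by (intro member_le_sum) auto
  show ?thesis
  proof (cases "s \<in> S")
    case True then show ?thesis using b by auto
  next
    case False
    then obtain t where t: "t \<in> S" "s = inv t" using assms by auto
    have tc: "t \<in> carrier G" using t SG by auto
    have "dM x0 (\<phi> (inv t \<otimes> \<one>) x0) = dM (\<phi> t x0) (\<phi> \<one> x0)" using iso_inv[of t "\<one>"] tc by simp
    then have "dM x0 (\<phi> s x0) = dM x0 (\<phi> t x0)"
      using t tc phi_one x0M Metric_space.commute[OF ms] by simp
    then show ?thesis using b t by simp
  qed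
qed

lemma orbit_word: "set ws \<subseteq> T \<Longrightarrow> dM x0 (\<phi> (foldr (\<otimes>) ws \<one>) x0) \<le> lam * length ws"
proof (induction ws)
  case Nil
  have "dM x0 x0 = 0" using Metric_space.zero[OF ms x0M x0M] by simp
  then show ?case using phi_one x0M by simp
next
  case (Cons w ws)
  have w: "w \<in> carrier G" "w \<in> T" using Cons.prems SG by auto
  have c: "foldr (\<otimes>) ws \<one> \<in> carrier G" using T_carrier Cons.prems by auto
  let ?y = "\<phi> (foldr (\<otimes>) ws \<one>) x0"
  have yM: "?y \<in> M" using phi_M c x0M by auto
  have "dM x0 (\<phi> (w \<otimes> foldr (\<otimes>) ws \<one>) x0) = dM x0 (\<phi> w ?y)" using phi_comp w c x0M by simp
  also have "\<dots> \<le> dM x0 (\<phi> w x0) + dM (\<phi> w x0) (\<phi> w ?y)"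
    using Metric_space.triangle[OF ms] x0M yM phi_M w by auto
  also have "dM (\<phi> w x0) (\<phi> w ?y) = dM x0 ?y" using iso w x0M yM by auto
  finally show ?case using gen_bound[OF w(2)] Cons by (simp add: algebra_simps)
qed

lemma lip: assumes "g \<in> carrier G" "h \<in> carrier G"
  shows "dM (\<phi> g x0) (\<phi> h x0) \<le> lam * word_dist G S g h"
proof -
  obtain ws where ws: "length ws = word_length G S (inv g \<otimes> h)" "set ws \<subseteq> T" "foldr (\<otimes>) ws \<one> = inv g \<otimes> h"
    using word_length_attained assms by (meson inv_closed m_closed)
  show ?thesis using orbit_word[OF ws(2)] ws iso_inv[OF assms] unfolding word_dist_def by simp
qed

lemma main:
  assumes apc: "asymptotic_property_C M dM"
    and qs: "\<forall>R>0. asdim_le (quasi_stabilizer G \<phi> dM R x0) (word_dist G S) n"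
  shows "asymptotic_property_C (carrier G) (word_dist G S)"
  unfolding asymptotic_property_C_def
proof (intro allI impI)
  fix r :: "nat \<Rightarrow> real" assume r: "0 < r 0 \<and> strict_mono r"
  define wd where "wd = word_dist G S"
  define W where "W R = quasi_stabilizer G \<phi> dM R x0" for R
  define lam' where "lam' = lam + 1"
  have lam'pos: "lam' > 0" unfolding lam'_def using lam_nonneg by simp
  define N where "N = Suc n"
  define rr where "rr j = r (N*j + n)" for j
  define s where "s j = lam' * (rr j + 1)" for j
  have rmono: "r i \<le> r k" if "i \<le> k" for i k
    using r that by (simp add: strict_mono_less_eq)
  have rpos: "r i > 0" for i using rmono[of 0 i] r by simp
  have s: "0 < s 0 \<and> strict_mono s"
  proof
    show "0 < s 0" unfolding s_def using lam'pos rpos[of "N*0+n"] rr_def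
      by (simp add: add_pos_pos)
    show "strict_mono s"
    proof (rule strict_monoI)
      fix a b :: nat assume "a < b"
      then have "N*a < N*b" unfolding N_def by (metis mult_less_cancel1 zero_less_Suc)
      then have "N*a + n < N*b + n" by linarith
      then have "rr a < rr b" unfolding rr_def using r by (simp add: strict_mono_less)
      then show "s a < s b" unfolding s_def using lam'pos by simp
    qed
  qed
  have "\<exists>m F. (\<forall>i\<le>m. (\<forall>F\<in>F i. F \<subseteq> M) \<and> uniformly_bounded dM (F i) \<and> r_disjoint dM (s i) (F i))
           \<and> M \<subseteq> (\<Union>i\<le>m. \<Union>(F i))"
    using apc[unfolded asymptotic_property_C_def, rule_format, OF s] .
  then obtain m U where
    U: "\<forall>j\<le>m. (\<forall>F\<in>U j. F \<subseteq> M) \<and> uniformly_bounded dM (U j) \<and> r_disjoint dM (s j) (U j)"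
    and cov: "M \<subseteq> (\<Union>j\<le>m. \<Union>(U j))"
    by (elim exE conjE)
  have "\<forall>j. \<exists>D. j \<le> m \<longrightarrow> D > 0 \<and> (\<forall>F\<in>U j. set_diam dM F < ereal D)"
  proof
    fix j
    show "\<exists>D. j \<le> m \<longrightarrow> D > 0 \<and> (\<forall>F\<in>U j. set_diam dM F < ereal D)"
    proof (cases "j \<le> m")
      case True
      then have "uniformly_bounded dM (U j)" using U by simp
      then obtain R where "R > 0" "\<forall>F\<in>U j. set_diam dM F < ereal R"
        unfolding uniformly_bounded_def by (elim exE conjE)
      then show ?thesis by (intro exI[of _ R]) simp
    qed simp
  qed
  from choice[OF this] obtain D where D0: "\<forall>j. j \<le> m \<longrightarrow> D j > 0 \<and> (\<forall>F\<in>U j. set_diam dM F < ereal (D j))"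
    by (elim exE)
  then have D: "\<And>j. j \<le> m \<Longrightarrow> D j > 0 \<and> (\<forall>F\<in>U j. set_diam dM F < ereal (D j))"
    by simp
  have "\<forall>j. \<exists>V::nat \<Rightarrow> 'a set set. j \<le> m \<longrightarrow>
      (\<forall>k\<le>n. (\<forall>F\<in>V k. F \<subseteq> W (D j)) \<and> uniformly_bounded wd (V k) \<and> r_disjoint wd (rr j) (V k))
      \<and> W (D j) \<subseteq> (\<Union>k\<le>n. \<Union>(V k))"
  proof
    fix j
    show "\<exists>V::nat \<Rightarrow> 'a set set. j \<le> m \<longrightarrow>
      (\<forall>k\<le>n. (\<forall>F\<in>V k. F \<subseteq> W (D j)) \<and> uniformly_bounded wd (V k) \<and> r_disjoint wd (rr j) (V k))
      \<and> W (D j) \<subseteq> (\<Union>k\<le>n. \<Union>(V k))"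
    proof (cases "j \<le> m")
      case True
      then have Dj: "D j > 0" using D by simp
      have "asdim_le (W (D j)) wd n" unfolding W_def wd_def using qs[rule_format, OF Dj] .
      moreover have rj: "rr j > 0" unfolding rr_def using rpos by simp
      ultimately obtain V :: "nat \<Rightarrow> 'a set set" where
        "(\<forall>k\<le>n. (\<forall>F\<in>V k. F \<subseteq> W (D j)) \<and> uniformly_bounded wd (V k) \<and> r_disjoint wd (rr j) (V k))
          \<and> W (D j) \<subseteq> (\<Union>k\<le>n. \<Union>(V k))"
        unfolding asdim_le_def by (metis rj)
      then show ?thesis by (intro exI[of _ V]) simp
    qed simp
  qed
  from choice[OF this] obtain V where V0: "\<forall>j. j \<le> m \<longrightarrow>
      (\<forall>k\<le>n. (\<forall>F\<in>V j k. F \<subseteq> W (D j)) \<and> uniformly_bounded wd (V j k) \<and> r_disjoint wd (rr j) (V j k))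
      \<and> W (D j) \<subseteq> (\<Union>k\<le>n. \<Union>(V j k))"
    by (elim exE)
  then have V: "\<And>j. j \<le> m \<Longrightarrow>
      (\<forall>k\<le>n. (\<forall>F\<in>V j k. F \<subseteq> W (D j)) \<and> uniformly_bounded wd (V j k) \<and> r_disjoint wd (rr j) (V j k))
      \<and> W (D j) \<subseteq> (\<Union>k\<le>n. \<Union>(V j k))"
    by simp
  have "\<forall>p. \<exists>B. fst p \<le> m \<and> snd p \<le> n \<longrightarrow> (\<forall>F\<in>V (fst p) (snd p). set_diam wd F < ereal B)"
  proof
    fix p :: "nat \<times> nat"
    show "\<exists>B. fst p \<le> m \<and> snd p \<le> n \<longrightarrow> (\<forall>F\<in>V (fst p) (snd p). set_diam wd F < ereal B)"
    proof (cases "fst p \<le> m \<and> snd p \<le> n")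
      case True
      then have "uniformly_bounded wd (V (fst p) (snd p))" using V by simp
      then obtain R where "\<forall>F\<in>V (fst p) (snd p). set_diam wd F < ereal R"
        unfolding uniformly_bounded_def by (elim exE conjE)
      then show ?thesis by (intro exI[of _ R]) simp
    next
      case False
      then show ?thesis by (intro exI[of _ 0]) blast
    qed
  qed
  from choice[OF this] obtain B' where B0: "\<forall>p. fst p \<le> m \<and> snd p \<le> n \<longrightarrow> (\<forall>F\<in>V (fst p) (snd p). set_diam wd F < ereal (B' p))"
    by (elim exE)
  define B where "B j k = B' (j, k)" for j k
  have B: "\<And>j k. j \<le> m \<Longrightarrow> k \<le> n \<Longrightarrow> \<forall>F\<in>V j k. set_diam wd F < ereal (B j k)"
    unfolding B_def using B0 by (metis fst_conv snd_conv)
  define rep where "rep A = (SOME g. g \<in> carrier G \<and> \<phi> g x0 \<in> A)" for A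
  define E where "E A Z = {h \<in> carrier G. \<phi> h x0 \<in> A \<and> inv (rep A) \<otimes> h \<in> Z}" for A Z
  define F where "F i = {E A Z | A Z. A \<in> U (i div N) \<and> Z \<in> V (i div N) (i mod N)}" for i
  have rep: "rep A \<in> carrier G \<and> \<phi> (rep A) x0 \<in> A" if "h \<in> carrier G" "\<phi> h x0 \<in> A" for h A
    unfolding rep_def using that someI[of "\<lambda>g. g \<in> carrier G \<and> \<phi> g x0 \<in> A" h] by blast
  have dwd: "wd h h' = wd (inv (rep A) \<otimes> h) (inv (rep A) \<otimes> h')"
    if "h \<in> E A Z" "h' \<in> E A Z'" for h h' A Z Z'
    using that rep[of h A] wd_left[of "inv (rep A)" h h'] unfolding E_def wd_def by auto
  have idx: "i div N \<le> m \<and> i mod N \<le> n \<and> r i \<le> rr (i div N)" if "i \<le> N*m + n" for i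
  proof -
    have "i div N \<le> (N*m+n) div N" using that div_le_mono by blast
    also have "\<dots> = m + n div N" by (metis N_def Zero_not_Suc add.commute div_mult_self2)
    also have "n div N = 0" unfolding N_def by simp
    finally have 1: "i div N \<le> m" by simp
    have 2: "i mod N \<le> n" unfolding N_def by (simp add: less_Suc_eq_le)
    have "i = N * (i div N) + i mod N" by simp
    then have "i \<le> N * (i div N) + n" using 2 by linarith
    then show ?thesis using 1 2 rmono unfolding rr_def by auto
  qed
  show "\<exists>m' F. (\<forall>i\<le>m'. (\<forall>F\<in>F i. F \<subseteq> carrier G) \<and> uniformly_bounded (word_dist G S) (F i)
          \<and> r_disjoint (word_dist G S) (r i) (F i)) \<and> carrier G \<subseteq> (\<Union>i\<le>m'. \<Union>(F i))"
  proof (intro exI conjI allI impI)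
    fix i assume i: "i \<le> N*m + n"
    define j where "j = i div N"
    define k where "k = i mod N"
    have jk: "j \<le> m" "k \<le> n" "r i \<le> rr j" using idx[OF i] unfolding j_def k_def by auto
    have Fi: "F i = {E A Z | A Z. A \<in> U j \<and> Z \<in> V j k}" unfolding F_def j_def k_def by simp
    show "\<forall>F\<in>F i. F \<subseteq> carrier G" unfolding Fi E_def by auto
    show "uniformly_bounded (word_dist G S) (F i)"
      unfolding uniformly_bounded_def
    proof (intro exI[of _ "max 1 (B j k + 1)"] conjI ballI)
      show "0 < max 1 (B j k + 1)" by simp
      fix X assume "X \<in> F i"
      then obtain A Z where X: "X = E A Z" "Z \<in> V j k" unfolding Fi by blast
      have "\<forall>x\<in>X. \<forall>y\<in>X. word_dist G S x y \<le> B j k"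
      proof (intro ballI)
        fix x y assume "x \<in> X" "y \<in> X"
        then have "wd x y = wd (inv (rep A) \<otimes> x) (inv (rep A) \<otimes> y)"
          "inv (rep A) \<otimes> x \<in> Z" "inv (rep A) \<otimes> y \<in> Z"
          using dwd X unfolding E_def by auto
        then show "word_dist G S x y \<le> B j k"
          using set_diam_lt B[OF jk(1,2)] X(2) unfolding wd_def by fastforce
      qed
      then have "set_diam (word_dist G S) X \<le> ereal (B j k)" by (rule set_diam_le)
      also have "\<dots> < ereal (max 1 (B j k + 1))"
      proof -
        have "B j k < max 1 (B j k + 1)" by simp
        then show ?thesis by (simp only: less_ereal.simps)
      qed
      finally show "set_diam (word_dist G S) X < ereal (max 1 (B j k + 1))" .
    qed
    show "r_disjoint (word_dist G S) (r i) (F i)"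
      unfolding r_disjoint_def
    proof (intro ballI impI)
      fix X1 X2 assume X12: "X1 \<in> F i" "X2 \<in> F i" "X1 \<noteq> X2"
      then obtain A Z A' Z' where X: "X1 = E A Z" "A \<in> U j" "Z \<in> V j k"
        "X2 = E A' Z'" "A' \<in> U j" "Z' \<in> V j k" unfolding Fi by blast
      show "ereal (r i) < set_dist (word_dist G S) X1 X2"
      proof (cases "A = A'")
        case False
        have sdA: "ereal (s j) < set_dist dM A A'" using U jk(1) X False
          unfolding r_disjoint_def by blast
        have "\<forall>x\<in>X1. \<forall>y\<in>X2. rr j + 1 \<le> word_dist G S x y"
        proof (intro ballI)
          fix x y assume xy: "x \<in> X1" "y \<in> X2"
          then have xy': "x \<in> carrier G" "y \<in> carrier G" "\<phi> x x0 \<in> A" "\<phi> y x0 \<in> A'"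
            using X unfolding E_def by auto
          have "ereal (s j) < ereal (dM (\<phi> x x0) (\<phi> y x0))"
            using sdA set_dist_le_pt[OF xy'(3,4), of dM] by (meson order_less_le_trans)
          then have "s j < dM (\<phi> x x0) (\<phi> y x0)" by simp
          also have "\<dots> \<le> lam * word_dist G S x y" using lip xy' by auto
          also have "\<dots> \<le> lam' * word_dist G S x y" unfolding lam'_def
            using wd_nonneg by (simp add: algebra_simps)
          finally have "lam' * (rr j + 1) < lam' * word_dist G S x y" unfolding s_def .
          then show "rr j + 1 \<le> word_dist G S x y" using lam'pos by simp
        qed
        then have "ereal (rr j + 1) \<le> set_dist (word_dist G S) X1 X2" by (rule set_dist_ge)
        moreover have "ereal (r i) < ereal (rr j + 1)" using jk by simp
        ultimately show ?thesis by (meson order_less_le_trans)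
      next
        case True
        then have "Z \<noteq> Z'" using X X12 by auto
        then have sdZ: "ereal (rr j) < set_dist wd Z Z'" using V[OF jk(1)] jk(2) X
          unfolding r_disjoint_def by blast
        have "set_dist wd Z Z' \<le> set_dist wd X1 X2"
        proof (rule set_dist_mono)
          fix x y assume xy: "x \<in> X1" "y \<in> X2"
          then have "wd x y = wd (inv (rep A) \<otimes> x) (inv (rep A) \<otimes> y)"
            "inv (rep A) \<otimes> x \<in> Z" "inv (rep A) \<otimes> y \<in> Z'"
            using dwd X True unfolding E_def by auto
          then show "\<exists>x'\<in>Z. \<exists>y'\<in>Z'. wd x' y' \<le> wd x y" by auto
        qed
        note le12 = this
        have "ereal (r i) \<le> ereal (rr j)" using jk(3) by simp
        also have "\<dots> < set_dist wd Z Z'" by (rule sdZ)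
        also have "\<dots> \<le> set_dist wd X1 X2" by (rule le12)
        finally show ?thesis unfolding wd_def .
      qed
    qed
  next
    show "carrier G \<subseteq> (\<Union>i\<le>N*m+n. \<Union>(F i))"
    proof
      fix g assume g: "g \<in> carrier G"
      then have "\<phi> g x0 \<in> M" using phi_M x0M by auto
      then obtain j A where jA: "j \<le> m" "A \<in> U j" "\<phi> g x0 \<in> A" using cov by blast
      have rA: "rep A \<in> carrier G" "\<phi> (rep A) x0 \<in> A" using rep[OF g jA(3)] by auto
      define q where "q = inv (rep A) \<otimes> g"
      have qc: "q \<in> carrier G" unfolding q_def using rA g by simp
      have "dM x0 (\<phi> q x0) = dM (\<phi> (rep A) x0) (\<phi> g x0)" unfolding q_def using iso_inv rA g by simp
      also have "\<dots> < D j"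
      proof -
        have "set_diam dM A < ereal (D j)" using D[OF jA(1)] jA(2) by simp
        then show ?thesis using set_diam_lt[of dM A "D j"] rA(2) jA(3) by simp
      qed
      finally have "q \<in> W (D j)" unfolding W_def quasi_stabilizer_def using qc by simp
      then have "q \<in> (\<Union>k\<le>n. \<Union>(V j k))" using V[OF jA(1)] by (meson subsetD)
      then obtain k Z where kZ: "k \<le> n" "Z \<in> V j k" "q \<in> Z" by (elim UN_E Union_iff[THEN iffD1, THEN bexE]) simp
      define i where "i = N*j + k"
      have kN: "k < N" unfolding N_def using kZ by simp
      have "i = k + N * j" unfolding i_def by simp
      then have "i div N = j + k div N" "i mod N = k mod N"
        using div_mult_self2[of N k j] mod_mult_self2[of k N j] unfolding N_def by simp_all
      then have "i div N = j" "i mod N = k" using kN by simp_all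
      then have "E A Z \<in> F i" unfolding F_def using jA kZ by auto
      moreover have "g \<in> E A Z" unfolding E_def using g jA kZ q_def by auto
      moreover have "i \<le> N*m + n" unfolding i_def using jA kZ
        by (simp add: add_mono)
      ultimately show "g \<in> (\<Union>i\<le>N*m+n. \<Union>(F i))" by blast
    qed
  qed
qed

end

theorem proposition1:
  fixes G :: "('g, 'b) monoid_scheme" and S :: "'g set"
    and M :: "'m set" and dM :: "'m \<Rightarrow> 'm \<Rightarrow> real" and \<phi> :: "'g \<Rightarrow> 'm \<Rightarrow> 'm"
    and x0 :: 'm and n :: nat
  assumes "group G"
    and "finite S" and "S \<subseteq> carrier G" and "generate G S = carrier G"
    and "Metric_space M dM"
    and "group_action G M \<phi>"
    and "\<forall>g\<in>carrier G. \<forall>x\<in>M. \<forall>y\<in>M. dM (\<phi> g x) (\<phi> g y) = dM x y"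
    and "\<forall>x\<in>M. \<forall>y\<in>M. \<exists>g\<in>carrier G. \<phi> g x = y"
    and "x0 \<in> M"
    and "asymptotic_property_C M dM"
    and "\<forall>R>0. asdim_le (quasi_stabilizer G \<phi> dM R x0) (word_dist G S) n"
  shows "asymptotic_property_C (carrier G) (word_dist G S)"
proof -
  interpret p1ctx G S M dM \<phi> x0
    using assms(1-7,9) unfolding p1ctx_def p1ctx_axioms_def by blast
  show ?thesis using main[OF assms(10,11)] .
qed

end
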